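(* Let $\mathcal{C}$ be a class of formal languages closed under unions and under inverse images of monoid homomorphisms. Let $N$ and $Q$ be finitely generated groups, let $G$ be a group and let $f\colon G\to Q$ be a surjective homomorphism with kernel $N$ (so $G$ is an extension of $N$ by $Q$). Let $P_N\subseteq N$ and $P_Q\subseteq Q$ be $\mathcal{C}$-positive cones of $N$ and $Q$ respectively. Then $f^{-1}(P_Q)\cup P_N$ is a $\mathcal{C}$-positive cone of $G$. In particular, this holds when $\mathcal{C}$ is any full abstract family of languages, such as the class of regular languages, the class of one-counter languages or the class of context-free languages.
   Context: A positive cone of a group $H$ is a subsemigroup $P\subseteq H$ with $H=P\sqcup P^{-1}\sqcup\{1_H\}$ (disjoint union); positive cones correspond to left-orders via $a\prec b\iff a^{-1}b\in P$. A finite generating set of a group $H$ is a finite set $X$ together with a surjective monoid homomorphism $\pi\colon X^*\to H$ from the free monoid on $X$. For a class $\mathcal{C}$ of formal languages, a positive cone $P$ of a finitely generated group $H$ is a $\mathcal{C}$-positive cone if there is a finite generating set $(X,\pi)$ of $H$ and a language $\mathcal{L}\subseteq X^*$ in $\mathcal{C}$ with $\pi(\mathcal{L})=P$. A full abstract family of languages (full AFL) is a class of languages closed under monoid homomorphisms, inverse monoid homomorphisms, intersection with regular languages, unions, concatenation and Kleene closure. A one-counter language is one accepted by a nondeterministic pushdown automaton whose stack alphabet consists of a single symbol. *)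

theory Defs
  imports "HOL-Algebra.Algebra"
begin

(* Letters of all alphabets are drawn from nat; a language is a set of words (nat lists)
   over some finite alphabet. A class of languages is a set of such languages. *)

definition language_class :: "nat list set set \<Rightarrow> bool" where
  "language_class C \<longleftrightarrow> (\<forall>L\<in>C. \<exists>S. finite S \<and> L \<subseteq> lists S)"

definition closed_under_unions :: "nat list set set \<Rightarrow> bool" where
  "closed_under_unions C \<longleftrightarrow> (\<forall>L1\<in>C. \<forall>L2\<in>C. L1 \<union> L2 \<in> C)"

(* a monoid homomorphism h : Y^* \<rightarrow> Sigma^* is determined by the images g y of the letters:
   h w = concat (map g w); its inverse image of L is the set of words over Y mapped into L *)
definition closed_under_inverse_homs :: "nat list set set \<Rightarrow> bool" where
  "closed_under_inverse_homs C \<longleftrightarrow>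
     (\<forall>L\<in>C. \<forall>Y (g :: nat \<Rightarrow> nat list). finite Y \<longrightarrow>
        {w \<in> lists Y. concat (map g w) \<in> L} \<in> C)"

definition word_eval :: "('g, 'b) monoid_scheme \<Rightarrow> (nat \<Rightarrow> 'g) \<Rightarrow> nat list \<Rightarrow> 'g" where
  "word_eval H e w = foldr (\<lambda>x acc. e x \<otimes>\<^bsub>H\<^esub> acc) w \<one>\<^bsub>H\<^esub>"

definition fin_gen_group :: "('g, 'b) monoid_scheme \<Rightarrow> bool" where
  "fin_gen_group H \<longleftrightarrow> group H \<and> (\<exists>A. finite A \<and> A \<subseteq> carrier H \<and> generate H A = carrier H)"

definition positive_cone :: "('g, 'b) monoid_scheme \<Rightarrow> 'g set \<Rightarrow> bool" where
  "positive_cone H P \<longleftrightarrow>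
     P \<subseteq> carrier H \<and>
     (\<forall>a\<in>P. \<forall>b\<in>P. a \<otimes>\<^bsub>H\<^esub> b \<in> P) \<and>
     carrier H = P \<union> (m_inv H) ` P \<union> {\<one>\<^bsub>H\<^esub>} \<and>
     P \<inter> (m_inv H) ` P = {} \<and> \<one>\<^bsub>H\<^esub> \<notin> P \<and> \<one>\<^bsub>H\<^esub> \<notin> (m_inv H) ` P"

definition fin_gen_set :: "('g, 'b) monoid_scheme \<Rightarrow> nat set \<Rightarrow> (nat \<Rightarrow> 'g) \<Rightarrow> bool" where
  "fin_gen_set H S e \<longleftrightarrow> finite S \<and> e ` S \<subseteq> carrier H \<and> word_eval H e ` lists S = carrier H"

definition C_positive_cone :: "nat list set set \<Rightarrow> ('g, 'b) monoid_scheme \<Rightarrow> 'g set \<Rightarrow> bool" where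
  "C_positive_cone C H P \<longleftrightarrow> positive_cone H P \<and>
     (\<exists>S e L. fin_gen_set H S e \<and> L \<in> C \<and> L \<subseteq> lists S \<and> word_eval H e ` L = P)"

end

theory Submission
  imports Defs
begin

lemma word_eval_Nil[simp]: "word_eval H e [] = \<one>\<^bsub>H\<^esub>"
  by (simp add: word_eval_def)

lemma word_eval_Cons[simp]: "word_eval H e (x#w) = e x \<otimes>\<^bsub>H\<^esub> word_eval H e w"
  by (simp add: word_eval_def)

lemma word_eval_closed:
  "monoid H \<Longrightarrow> \<forall>x\<in>set w. e x \<in> carrier H \<Longrightarrow> word_eval H e w \<in> carrier H"
  by (induction w) (auto intro: monoid.m_closed monoid.one_closed)

lemma word_eval_append:
  "monoid H \<Longrightarrow> \<forall>x\<in>set u. e x \<in> carrier H \<Longrightarrow> \<forall>x\<in>set v. e x \<in> carrier H \<Longrightarrow>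
   word_eval H e (u@v) = word_eval H e u \<otimes>\<^bsub>H\<^esub> word_eval H e v"
  by (induction u) (auto simp: monoid.m_assoc word_eval_closed monoid.l_one)

lemma word_eval_upd[simp]: "word_eval (H\<lparr>carrier := K\<rparr>) e = word_eval H e"
  by (simp add: word_eval_def fun_eq_iff)

lemma word_eval_cong: "\<forall>x\<in>set w. e x = e' x \<Longrightarrow> word_eval H e w = word_eval H e' w"
  by (induction w) auto

lemma word_eval_map: "word_eval H e (map h w) = word_eval H (e \<circ> h) w"
  by (induction w) auto

theorem proposition3p3:
  fixes C :: "nat list set set"
    and G :: "('g, 'b) monoid_scheme"
    and Q :: "('q, 'c) monoid_scheme"
    and f :: "'g \<Rightarrow> 'q"
    and PN :: "'g set" and PQ :: "'q set"
  assumes "language_class C"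
    and "closed_under_unions C"
    and "closed_under_inverse_homs C"
    and "group G" and "group Q"
    and "f \<in> hom G Q" and "f ` carrier G = carrier Q"
    and "fin_gen_group (G\<lparr>carrier := kernel G Q f\<rparr>)"
    and "fin_gen_group Q"
    and "C_positive_cone C (G\<lparr>carrier := kernel G Q f\<rparr>) PN"
    and "C_positive_cone C Q PQ"
  shows "C_positive_cone C G ((f -` PQ \<inter> carrier G) \<union> PN)"
proof -
  interpret fh: group_hom G Q f using assms(4,5,6) by (simp add: group_hom_def group_hom_axioms_def)
  define K where "K = kernel G Q f"
  have subK: "subgroup K G" using fh.subgroup_kernel K_def by simp
  have K_iff: "x \<in> K \<longleftrightarrow> x \<in> carrier G \<and> f x = \<one>\<^bsub>Q\<^esub>" for x by (simp add: K_def kernel_def)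
  have invN: "x \<in> K \<Longrightarrow> inv\<^bsub>G\<lparr>carrier := K\<rparr>\<^esub> x = inv\<^bsub>G\<^esub> x" for x
    using group.m_inv_consistent[OF assms(4) subK] by simp
  from assms(10) obtain SN eN LN where pcN: "positive_cone (G\<lparr>carrier := K\<rparr>) PN"
    and fgN: "fin_gen_set (G\<lparr>carrier := K\<rparr>) SN eN" and LN: "LN \<in> C" "LN \<subseteq> lists SN"
    "word_eval G eN ` LN = PN"
    unfolding C_positive_cone_def K_def by auto
  from assms(11) obtain SQ eQ LQ where pcQ: "positive_cone Q PQ"
    and fgQ: "fin_gen_set Q SQ eQ" and LQ: "LQ \<in> C" "LQ \<subseteq> lists SQ"
    "word_eval Q eQ ` LQ = PQ"
    unfolding C_positive_cone_def by auto
  have PN1: "PN \<subseteq> K" and PN2: "\<forall>a\<in>PN. \<forall>b\<in>PN. a \<otimes>\<^bsub>G\<^esub> b \<in> PN"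
    and PN3: "K = PN \<union> (m_inv G) ` PN \<union> {\<one>\<^bsub>G\<^esub>}"
    and PN4: "PN \<inter> (m_inv G) ` PN = {}" and PN5: "\<one>\<^bsub>G\<^esub> \<notin> PN"
  proof -
    have a: "PN \<subseteq> K" using pcN by (simp add: positive_cone_def)
    have b: "m_inv (G\<lparr>carrier := K\<rparr>) ` PN = m_inv G ` PN"
      using a invN by (auto simp: image_def) (metis subsetD)+
    show "PN \<subseteq> K" by (fact a)
    show "\<forall>a\<in>PN. \<forall>b\<in>PN. a \<otimes>\<^bsub>G\<^esub> b \<in> PN"
      "K = PN \<union> (m_inv G) ` PN \<union> {\<one>\<^bsub>G\<^esub>}" "PN \<inter> (m_inv G) ` PN = {}" "\<one>\<^bsub>G\<^esub> \<notin> PN"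
      using pcN b by (simp_all add: positive_cone_def)
  qed
  have PQ1: "PQ \<subseteq> carrier Q" and PQ2: "\<forall>a\<in>PQ. \<forall>b\<in>PQ. a \<otimes>\<^bsub>Q\<^esub> b \<in> PQ"
    and PQ3: "carrier Q = PQ \<union> (m_inv Q) ` PQ \<union> {\<one>\<^bsub>Q\<^esub>}"
    and PQ4: "PQ \<inter> (m_inv Q) ` PQ = {}" and PQ5: "\<one>\<^bsub>Q\<^esub> \<notin> PQ"
    using pcQ unfolding positive_cone_def by blast+
  define P where "P = (f -` PQ \<inter> carrier G) \<union> PN"
  have PK: "PN \<subseteq> carrier G" using PN1 subgroup.subset[OF subK] by blast
  have pc: "positive_cone G P"
    unfolding positive_cone_def
  proof (intro conjI)
    show "P \<subseteq> carrier G" using PK by (auto simp: P_def)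
    show "\<forall>a\<in>P. \<forall>b\<in>P. a \<otimes>\<^bsub>G\<^esub> b \<in> P"
    proof (intro ballI)
      fix a b assume a: "a \<in> P" and b: "b \<in> P"
      have ac: "a \<in> carrier G" "b \<in> carrier G" using a b PK by (auto simp: P_def)
      have fab: "f (a \<otimes>\<^bsub>G\<^esub> b) = f a \<otimes>\<^bsub>Q\<^esub> f b" using ac by simp
      show "a \<otimes>\<^bsub>G\<^esub> b \<in> P"
      proof (cases "a \<in> PN")
        case True
        show ?thesis
        proof (cases "b \<in> PN")
          case True
          then show ?thesis using \<open>a \<in> PN\<close> PN2 by (auto simp: P_def)
        next
          case False
          then have "f b \<in> PQ" using b by (auto simp: P_def)
          moreover have "f a = \<one>\<^bsub>Q\<^esub>" using \<open>a \<in> PN\<close> PN1 K_iff by auto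
          ultimately show ?thesis using fab ac PQ1 by (auto simp: P_def)
        qed
      next
        case False
        then have fa: "f a \<in> PQ" using a by (auto simp: P_def)
        show ?thesis
        proof (cases "b \<in> PN")
          case True
          then have "f b = \<one>\<^bsub>Q\<^esub>" using PN1 K_iff by auto
          then show ?thesis using fa fab ac PQ1 by (auto simp: P_def)
        next
          case False
          then have "f b \<in> PQ" using b by (auto simp: P_def)
          then show ?thesis using fa fab ac PQ2 by (auto simp: P_def)
        qed
      qed
    qed
    show "carrier G = P \<union> m_inv G ` P \<union> {\<one>\<^bsub>G\<^esub>}"
    proof
      show "P \<union> m_inv G ` P \<union> {\<one>\<^bsub>G\<^esub>} \<subseteq> carrier G"
        using \<open>P \<subseteq> carrier G\<close> by auto
      show "carrier G \<subseteq> P \<union> m_inv G ` P \<union> {\<one>\<^bsub>G\<^esub>}"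
      proof
        fix g assume g: "g \<in> carrier G"
        have "f g \<in> carrier Q" using g by simp
        then consider "f g \<in> PQ" | "f g \<in> m_inv Q ` PQ" | "f g = \<one>\<^bsub>Q\<^esub>"
          using PQ3 by blast
        then show "g \<in> P \<union> m_inv G ` P \<union> {\<one>\<^bsub>G\<^esub>}"
        proof cases
          case 1 then show ?thesis using g by (auto simp: P_def)
        next
          case 2
          then obtain q where q: "q \<in> PQ" "f g = inv\<^bsub>Q\<^esub> q" by auto
          have "f (inv\<^bsub>G\<^esub> g) = q" using g q PQ1 by auto
          then have "inv\<^bsub>G\<^esub> g \<in> P" using g q by (auto simp: P_def)
          moreover have "g = inv\<^bsub>G\<^esub> (inv\<^bsub>G\<^esub> g)" using g by simp
          ultimately show ?thesis by blast
        next
          case 3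
          then have "g \<in> K" using g K_iff by auto
          then show ?thesis using PN3 by (auto simp: P_def)
        qed
      qed
    qed
    show "P \<inter> m_inv G ` P = {}"
    proof (rule ccontr)
      assume "P \<inter> m_inv G ` P \<noteq> {}"
      then obtain x y where x: "x \<in> P" and y: "y \<in> P" and xy: "x = inv\<^bsub>G\<^esub> y" by auto
      have yc: "y \<in> carrier G" using y PK by (auto simp: P_def)
      have fx: "f x = inv\<^bsub>Q\<^esub> f y" using xy yc by simp
      show False
      proof (cases "x \<in> PN")
        case True
        then have f1: "f x = \<one>\<^bsub>Q\<^esub>" using PN1 K_iff by auto
        have "f y = \<one>\<^bsub>Q\<^esub>" using f1 fx yc by simp
        then have "y \<in> PN" using y PQ5 by (auto simp: P_def)
        then show False using True xy PN4 by auto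
      next
        case False
        then have fxq: "f x \<in> PQ" using x by (auto simp: P_def)
        show False
        proof (cases "y \<in> PN")
          case True
          then have "f y = \<one>\<^bsub>Q\<^esub>" using PN1 K_iff by auto
          then show False using fx fxq PQ5 by simp
        next
          case False
          then have "f y \<in> PQ" using y by (auto simp: P_def)
          then show False using fx fxq PQ4 by auto
        qed
      qed
    qed
    show "\<one>\<^bsub>G\<^esub> \<notin> P" using PQ5 PN5 by (auto simp: P_def)
    show "\<one>\<^bsub>G\<^esub> \<notin> m_inv G ` P"
    proof
      assume "\<one>\<^bsub>G\<^esub> \<in> m_inv G ` P"
      then obtain y where y: "y \<in> P" "\<one>\<^bsub>G\<^esub> = inv\<^bsub>G\<^esub> y" by auto
      then have "y \<in> carrier G" using PK by (auto simp: P_def)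
      then have "y = \<one>\<^bsub>G\<^esub>" using y by (metis fh.G.inv_eq_1_iff)
      then show False using y \<open>\<one>\<^bsub>G\<^esub> \<notin> P\<close> by simp
    qed
  qed
  have SNf: "finite SN" and eNK: "eN ` SN \<subseteq> K" and eNs: "word_eval G eN ` lists SN = K"
    using fgN by (simp_all add: fin_gen_set_def)
  have SQf: "finite SQ" and eQs: "word_eval Q eQ ` lists SQ = carrier Q"
    and eQS: "eQ ` SQ \<subseteq> carrier Q"
    using fgQ by (simp_all add: fin_gen_set_def)
  define lift where "lift q = (SOME g. g \<in> carrier G \<and> f g = q)" for q
  have lift: "lift q \<in> carrier G \<and> f (lift q) = q" if "q \<in> carrier Q" for q
  proof -
    have "q \<in> f ` carrier G" using that assms(7) by simp
    then have "\<exists>g. g \<in> carrier G \<and> f g = q" by blast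
    then show ?thesis unfolding lift_def by (rule someI_ex)
  qed
  have eQc: "eQ x \<in> carrier Q" if "x \<in> SQ" for x
    using that eQS by blast
  define e where "e x = (if even x then eN (x div 2) else lift (eQ (x div 2)))" for x :: nat
  define YN where "YN = (\<lambda>n. 2*n) ` SN"
  define YQ where "YQ = (\<lambda>n. 2*n+1) ` SQ"
  define Xs where "Xs = YN \<union> YQ"
  have YN_iff: "x \<in> YN \<longleftrightarrow> even x \<and> x div 2 \<in> SN" for x
    unfolding YN_def by (auto elim!: evenE)
  have YQ_iff: "x \<in> YQ \<longleftrightarrow> odd x \<and> x div 2 \<in> SQ" for x
    unfolding YQ_def by (auto elim!: oddE)
  have Xsf: "finite Xs" using SNf SQf by (simp add: Xs_def YN_def YQ_def)
  have eX: "e x \<in> carrier G" if "x \<in> Xs" for x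
    using that eNK subgroup.subset[OF subK] lift eQc
    by (auto simp: Xs_def YN_iff YQ_iff e_def)
  have eXw: "\<forall>x\<in>set w. e x \<in> carrier G" if "w \<in> lists Xs" for w
    using that eX by auto
  define g1 where "g1 x = [x div 2]" for x :: nat
  define g2 where "g2 x = (if even x then [] else [x div 2])" for x :: nat
  define L1 where "L1 = {w \<in> lists YN. concat (map g1 w) \<in> LN}"
  define L2 where "L2 = {w \<in> lists Xs. concat (map g2 w) \<in> LQ}"
  define L where "L = L1 \<union> L2"
  have LC: "L \<in> C"
  proof -
    have "finite YN" using SNf by (simp add: YN_def)
    then have "L1 \<in> C" using assms(3) LN(1) unfolding closed_under_inverse_homs_def L1_def by blast
    moreover have "L2 \<in> C" using Xsf assms(3) LQ(1) unfolding closed_under_inverse_homs_def L2_def by blast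
    ultimately show ?thesis using assms(2) unfolding closed_under_unions_def L_def by blast
  qed
  have LX: "L \<subseteq> lists Xs" by (auto simp: L_def L1_def L2_def Xs_def)
  have cg1: "concat (map g1 w) = map (\<lambda>x. x div 2) w" for w
    by (induction w) (auto simp: g1_def)
  have evN: "word_eval G e w = word_eval G eN (map (\<lambda>x. x div 2) w)" if "w \<in> lists YN" for w
    using that by (induction w) (auto simp: e_def YN_iff)
  have evQ: "f (word_eval G e w) = word_eval Q eQ (concat (map g2 w))" if "w \<in> lists Xs" for w
    using that
  proof (induction w)
    case Nil
    then show ?case by simp
  next
    case (Cons x w)
    have xX: "x \<in> Xs" and wX: "w \<in> lists Xs" using Cons by auto
    have xc: "e x \<in> carrier G" using eX[OF xX] .
    have wc: "word_eval G e w \<in> carrier G"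
      using eXw[OF wX] by (rule word_eval_closed[OF fh.G.monoid_axioms])
    have "f (word_eval G e (x#w)) = f (e x) \<otimes>\<^bsub>Q\<^esub> f (word_eval G e w)"
      using xc wc by simp
    also have "\<dots> = f (e x) \<otimes>\<^bsub>Q\<^esub> word_eval Q eQ (concat (map g2 w))"
      using Cons by simp
    also have "\<dots> = word_eval Q eQ (concat (map g2 (x#w)))"
    proof (cases "even x")
      case True
      then have "x \<in> YN" using xX by (auto simp: Xs_def YN_iff YQ_iff)
      then have "e x \<in> K" using eNK True by (auto simp: e_def YN_iff)
      then have "f (e x) = \<one>\<^bsub>Q\<^esub>" using K_iff by auto
      moreover have "word_eval Q eQ (concat (map g2 w)) \<in> carrier Q"
        using Cons.IH wX wc by (metis fh.hom_closed)
      ultimately show ?thesis using True by (simp add: g2_def)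
    next
      case False
      then have "x div 2 \<in> SQ" using xX by (auto simp: Xs_def YN_iff YQ_iff)
      then have "f (e x) = eQ (x div 2)" using False lift eQc by (simp add: e_def)
      then show ?thesis using False by (simp add: g2_def)
    qed
    finally show ?case .
  qed
  have decomp: "\<exists>w \<in> lists Xs. word_eval G e w = g \<and> concat (map g2 w) = u"
    if g: "g \<in> carrier G" and u: "u \<in> lists SQ" "word_eval Q eQ u = f g" for g u
  proof -
    define ut where "ut = map (\<lambda>n. 2*n+1) u"
    have utX: "ut \<in> lists Xs" using u by (auto simp: ut_def Xs_def YQ_def)
    have cu: "concat (map g2 ut) = u" unfolding ut_def by (induction u) (auto simp: g2_def)
    define h where "h = word_eval G e ut"
    have hc: "h \<in> carrier G" using utX eXw word_eval_closed[OF fh.G.monoid_axioms] h_def by blast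
    have fh: "f h = f g" using evQ[OF utX] cu u h_def by simp
    define k where "k = inv\<^bsub>G\<^esub> h \<otimes>\<^bsub>G\<^esub> g"
    have kc: "k \<in> carrier G" using hc g k_def by simp
    have "f k = inv\<^bsub>Q\<^esub> f h \<otimes>\<^bsub>Q\<^esub> f g" using hc g k_def by simp
    then have "f k = \<one>\<^bsub>Q\<^esub>" using fh g by simp
    then have "k \<in> K" using kc K_iff by auto
    then obtain v0 where v0: "v0 \<in> lists SN" "word_eval G eN v0 = k" using eNs by force
    define vt where "vt = map (\<lambda>n. 2*n) v0"
    have vtN: "vt \<in> lists YN" using v0 by (auto simp: vt_def YN_def)
    then have vtX: "vt \<in> lists Xs" by (auto simp: Xs_def)
    have "map (\<lambda>x. x div 2) vt = v0" by (simp add: vt_def comp_def)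
    then have evt: "word_eval G e vt = k" using evN[OF vtN] v0 by simp
    have cv: "concat (map g2 vt) = []" by (simp add: vt_def g2_def)
    have "word_eval G e (ut @ vt) = h \<otimes>\<^bsub>G\<^esub> k"
      using word_eval_append[OF fh.G.monoid_axioms eXw[OF utX] eXw[OF vtX]] evt h_def by simp
    also have "\<dots> = g" using hc g k_def by (simp add: fh.G.m_assoc[symmetric])
    finally show ?thesis using utX vtX cu cv by (intro bexI[of _ "ut @ vt"]) auto
  qed
  have surj: "word_eval G e ` lists Xs = carrier G"
  proof
    show "word_eval G e ` lists Xs \<subseteq> carrier G"
      using eXw word_eval_closed[OF fh.G.monoid_axioms] by blast
    show "carrier G \<subseteq> word_eval G e ` lists Xs"
    proof
      fix g assume g: "g \<in> carrier G"
      then have "f g \<in> carrier Q" by simp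
      then obtain u where "u \<in> lists SQ" "word_eval Q eQ u = f g" using eQs by force
      then show "g \<in> word_eval G e ` lists Xs" using decomp g by blast
    qed
  qed
  have img: "word_eval G e ` L = P"
  proof
    show "word_eval G e ` L \<subseteq> P"
    proof
      fix y assume "y \<in> word_eval G e ` L"
      then obtain w where w: "w \<in> L" "y = word_eval G e w" by auto
      show "y \<in> P"
      proof (cases "w \<in> L1")
        case True
        then have "w \<in> lists YN" "map (\<lambda>x. x div 2) w \<in> LN" using cg1 by (auto simp: L1_def)
        then show ?thesis using evN w LN(3) by (auto simp: P_def)
      next
        case False
        then have wX: "w \<in> lists Xs" and "concat (map g2 w) \<in> LQ" using w by (auto simp: L_def L2_def)
        then have "f y \<in> PQ" using evQ w LQ(3) by auto
        moreover have "y \<in> carrier G" using wX w surj by auto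
        ultimately show ?thesis by (auto simp: P_def)
      qed
    qed
    show "P \<subseteq> word_eval G e ` L"
    proof
      fix y assume y: "y \<in> P"
      show "y \<in> word_eval G e ` L"
      proof (cases "y \<in> PN")
        case True
        then obtain u where u: "u \<in> LN" "word_eval G eN u = y" using LN(3) by auto
        define w where "w = map (\<lambda>n. 2*n) u"
        have uS: "u \<in> lists SN" using u LN(2) by auto
        have wN: "w \<in> lists YN" using uS by (auto simp: w_def YN_def)
        have mw: "map (\<lambda>x. x div 2) w = u" by (simp add: w_def comp_def)
        then have "w \<in> L1" using wN u cg1 by (simp add: L1_def)
        moreover have "word_eval G e w = y" using evN[OF wN] mw u by simp
        ultimately show ?thesis by (auto simp: L_def)
      next
        case False
        then have yc: "y \<in> carrier G" and fy: "f y \<in> PQ" using y by (auto simp: P_def)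
        then obtain u where u: "u \<in> LQ" "word_eval Q eQ u = f y" using LQ(3) by auto
        then have "u \<in> lists SQ" using LQ(2) by auto
        then obtain w where "w \<in> lists Xs" "word_eval G e w = y" "concat (map g2 w) = u"
          using decomp yc u by blast
        then show ?thesis using u by (auto simp: L_def L2_def)
      qed
    qed
  qed
  have "fin_gen_set G Xs e" using Xsf eX surj by (auto simp: fin_gen_set_def)
  then show ?thesis unfolding C_positive_cone_def P_def[symmetric]
    using pc LC LX img by blast
qed

end
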